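(* Let $A\in\mathbb{R}^{n\times n}$ be monotone, let $A=P_1-R_1+S_1$ be a double weak regular splitting and $A=P_2-R_2+S_2$ a double regular splitting of $A$. Suppose $1\notin\sigma(S_2P_1^{-1})$, $\widehat{A}^{-1}\geq 0$ where $\widehat{A}=(I-S_2P_1^{-1})A$, $P_1^{-1}R_1\geq P_2^{-1}R_2$ and $P_2^{-1}S_2\geq P_1^{-1}S_1$. Then $\rho(W_{12})\leq\min\{\rho(T_1),\rho(T_2)\}<1$, where $$W_{12}=\begin{pmatrix} P_2^{-1}R_2-P_2^{-1}S_2P_1^{-1}R_1 & P_2^{-1}S_2P_1^{-1}S_1\\ I & 0\end{pmatrix},\qquad T_i=\begin{pmatrix} P_i^{-1}R_i & -P_i^{-1}S_i\\ I&0\end{pmatrix}\ (i=1,2).$$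
   Context: Inequalities are entrywise; $\rho$ is the spectral radius, $\sigma$ the spectrum. $A$ is monotone if $A$ is nonsingular and $A^{-1}\geq 0$. A double splitting $A=P-R+S$ with $P$ nonsingular is a double regular splitting if $P^{-1}\geq0$, $R\geq0$, $S\leq0$, and a double weak regular splitting if $P^{-1}\geq 0$, $P^{-1}R\geq0$, $P^{-1}S\leq0$. *)

theory Defs
  imports "Jordan_Normal_Form.Spectral_Radius"
begin

definition mat_inv :: "'a :: field mat \<Rightarrow> 'a mat" where
  "mat_inv A = (SOME B. inverts_mat A B \<and> inverts_mat B A)"

definition mat_le :: "real mat \<Rightarrow> real mat \<Rightarrow> bool" where
  "mat_le A B \<longleftrightarrow> dim_row A = dim_row B \<and> dim_col A = dim_col B \<and>
     (\<forall>i < dim_row A. \<forall>j < dim_col A. A $$ (i,j) \<le> B $$ (i,j))"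

definition nonneg_mat :: "real mat \<Rightarrow> bool" where
  "nonneg_mat A \<longleftrightarrow> mat_le (0\<^sub>m (dim_row A) (dim_col A)) A"

definition nonpos_mat :: "real mat \<Rightarrow> bool" where
  "nonpos_mat A \<longleftrightarrow> mat_le A (0\<^sub>m (dim_row A) (dim_col A))"

definition monotone_mat :: "real mat \<Rightarrow> bool" where
  "monotone_mat A \<longleftrightarrow> invertible_mat A \<and> nonneg_mat (mat_inv A)"

definition rho :: "real mat \<Rightarrow> real" where
  "rho A = spectral_radius (map_mat complex_of_real A)"

definition double_splitting :: "nat \<Rightarrow> real mat \<Rightarrow> real mat \<Rightarrow> real mat \<Rightarrow> real mat \<Rightarrow> bool" where
  "double_splitting n A P R S \<longleftrightarrow>
     A \<in> carrier_mat n n \<and> P \<in> carrier_mat n n \<and> R \<in> carrier_mat n n \<and> S \<in> carrier_mat n n \<and>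
     A = P - R + S \<and> invertible_mat P"

definition double_regular_splitting :: "nat \<Rightarrow> real mat \<Rightarrow> real mat \<Rightarrow> real mat \<Rightarrow> real mat \<Rightarrow> bool" where
  "double_regular_splitting n A P R S \<longleftrightarrow>
     double_splitting n A P R S \<and> nonneg_mat (mat_inv P) \<and> nonneg_mat R \<and> nonpos_mat S"

definition double_weak_regular_splitting :: "nat \<Rightarrow> real mat \<Rightarrow> real mat \<Rightarrow> real mat \<Rightarrow> real mat \<Rightarrow> bool" where
  "double_weak_regular_splitting n A P R S \<longleftrightarrow>
     double_splitting n A P R S \<and> nonneg_mat (mat_inv P) \<and>
     nonneg_mat (mat_inv P * R) \<and> nonpos_mat (mat_inv P * S)"

end

theory Submission
  imports Defs
begin

lemma mv_entry: "M \<in> carrier_mat r c \<Longrightarrow> w \<in> carrier_vec c \<Longrightarrow> i < r \<Longrightarrow>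
  (M *\<^sub>v w) $ i = (\<Sum>j=0..<c. M $$ (i,j) * w $ j)"
  by (simp add: scalar_prod_def)

lemma lincomb3: fixes M :: "real mat" assumes "M \<in> carrier_mat r c" "a \<in> carrier_vec c" "p \<in> carrier_vec c" "q \<in> carrier_vec c" "s \<in> carrier_vec c"
  "\<And>j. j < c \<Longrightarrow> a $ j = \<alpha> * p $ j + \<beta> * q $ j + \<gamma> * s $ j" "i < r"
shows "(M *\<^sub>v a) $ i = \<alpha> * (M *\<^sub>v p) $ i + \<beta> * (M *\<^sub>v q) $ i + \<gamma> * (M *\<^sub>v s) $ i"
proof -
  have "(M *\<^sub>v a) $ i = (\<Sum>j=0..<c. M $$ (i,j) * (\<alpha> * p $ j + \<beta> * q $ j + \<gamma> * s $ j))"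
    using assms by (simp add: mv_entry[OF assms(1)] del: index_mult_mat_vec)
  also have "\<dots> = (\<Sum>j=0..<c. \<alpha> * (M $$ (i,j) * p $ j) + \<beta> * (M $$ (i,j) * q $ j) + \<gamma> * (M $$ (i,j) * s $ j))"
    by (intro sum.cong) (auto simp: algebra_simps)
  also have "\<dots> = \<alpha> * (\<Sum>j=0..<c. M $$ (i,j) * p $ j) + \<beta> * (\<Sum>j=0..<c. M $$ (i,j) * q $ j) + \<gamma> * (\<Sum>j=0..<c. M $$ (i,j) * s $ j)"
    by (simp add: sum.distrib sum_distrib_left)
  finally show ?thesis using assms by (simp add: mv_entry[OF assms(1)] del: index_mult_mat_vec)
qed

lemma sum3_mat_entry: fixes A :: "real mat" assumes "A = P - R + S" "P \<in> carrier_mat n n" "R \<in> carrier_mat n n" "S \<in> carrier_mat n n"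
  "y \<in> carrier_vec n" "i < n"
  shows "(A *\<^sub>v y) $ i = (P *\<^sub>v y) $ i - (R *\<^sub>v y) $ i + (S *\<^sub>v y) $ i"
proof -
  have A: "A \<in> carrier_mat n n" using assms by simp
  have "(A *\<^sub>v y) $ i = (\<Sum>j=0..<n. (P $$ (i,j) - R $$ (i,j) + S $$ (i,j)) * y $ j)"
    unfolding mv_entry[OF A assms(5,6)] using assms by (intro sum.cong) auto
  also have "\<dots> = (\<Sum>j=0..<n. P $$ (i,j) * y $ j) - (\<Sum>j=0..<n. R $$ (i,j) * y $ j) + (\<Sum>j=0..<n. S $$ (i,j) * y $ j)"
    by (simp add: sum.distrib sum_subtractf algebra_simps)
  finally show ?thesis using assms by (simp add: mv_entry[of _ n n] del: index_mult_mat_vec)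
qed

lemma nonneg_mv: assumes "nonneg_mat M" "M \<in> carrier_mat r c" "w \<in> carrier_vec c" "\<And>j. j < c \<Longrightarrow> 0 \<le> w $ j" "i < r"
  shows "0 \<le> (M *\<^sub>v w) $ i"
proof -
  have "\<And>j. j < c \<Longrightarrow> 0 \<le> M $$ (i,j)" using assms(1,2,5) by (auto simp: nonneg_mat_def mat_le_def)
  then show ?thesis using assms by (auto simp: mv_entry[OF assms(2)] simp del: index_mult_mat_vec intro!: sum_nonneg)
qed

lemma nonpos_mv: assumes "nonpos_mat M" "M \<in> carrier_mat r c" "w \<in> carrier_vec c" "\<And>j. j < c \<Longrightarrow> 0 \<le> w $ j" "i < r"
  shows "(M *\<^sub>v w) $ i \<le> 0"
proof -
  have "\<And>j. j < c \<Longrightarrow> M $$ (i,j) \<le> 0" using assms(1,2,5) by (auto simp: nonpos_mat_def mat_le_def)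
  then show ?thesis using assms by (auto simp: mv_entry[OF assms(2)] simp del: index_mult_mat_vec intro!: sum_nonpos mult_nonpos_nonneg)
qed

lemma nonneg_mv_neg: assumes "nonneg_mat M" "M \<in> carrier_mat r c" "w \<in> carrier_vec c" "\<And>j. j < c \<Longrightarrow> w $ j \<le> 0" "i < r"
  shows "(M *\<^sub>v w) $ i \<le> 0"
proof -
  have "\<And>j. j < c \<Longrightarrow> 0 \<le> M $$ (i,j)" using assms(1,2,5) by (auto simp: nonneg_mat_def mat_le_def)
  then show ?thesis using assms by (auto simp: mv_entry[OF assms(2)] simp del: index_mult_mat_vec intro!: sum_nonpos mult_nonneg_nonpos)
qed

lemma mat_le_mv: assumes "mat_le M N" "M \<in> carrier_mat r c" "N \<in> carrier_mat r c" "w \<in> carrier_vec c" "\<And>j. j < c \<Longrightarrow> 0 \<le> w $ j" "i < r"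
  shows "(M *\<^sub>v w) $ i \<le> (N *\<^sub>v w) $ i"
proof -
  have "\<And>j. j < c \<Longrightarrow> M $$ (i,j) \<le> N $$ (i,j)" using assms by (auto simp: mat_le_def)
  then show ?thesis using assms by (auto simp: mv_entry[OF assms(2)] mv_entry[OF assms(3)] simp del: index_mult_mat_vec intro!: sum_mono mult_right_mono)
qed

lemma nonneg_mult: assumes "nonneg_mat A" "nonneg_mat B" "A \<in> carrier_mat r k" "B \<in> carrier_mat k c"
  shows "nonneg_mat (A * B)"
  using assms by (auto simp: nonneg_mat_def mat_le_def scalar_prod_def intro!: sum_nonneg)

lemma nonpos_mult: assumes "nonneg_mat A" "nonpos_mat B" "A \<in> carrier_mat r k" "B \<in> carrier_mat k c"
  shows "nonpos_mat (A * B)"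
  using assms by (auto simp: nonneg_mat_def nonpos_mat_def mat_le_def scalar_prod_def intro!: sum_nonpos mult_nonneg_nonpos)

lemma mat_inv_props: assumes "invertible_mat P" "P \<in> carrier_mat n n"
  shows "mat_inv P \<in> carrier_mat n n" "P * mat_inv P = 1\<^sub>m n" "mat_inv P * P = 1\<^sub>m n"
proof -
  have ex: "\<exists>B. inverts_mat P B \<and> inverts_mat B P" using assms unfolding invertible_mat_def by auto
  have h: "inverts_mat P (mat_inv P) \<and> inverts_mat (mat_inv P) P"
    unfolding mat_inv_def by (rule someI_ex[OF ex])
  let ?Q = "mat_inv P"
  from h have 1: "P * ?Q = 1\<^sub>m n" and 2: "?Q * P = 1\<^sub>m (dim_row ?Q)" using assms unfolding inverts_mat_def by auto
  have "dim_col (P * ?Q) = n" using 1 by simp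
  then have c: "dim_col ?Q = n" by simp
  have "dim_col (?Q * P) = dim_row ?Q" using 2 by simp
  then have r: "dim_row ?Q = n" using assms by simp
  show "?Q \<in> carrier_mat n n" using r c by auto
  show "P * ?Q = 1\<^sub>m n" by fact
  show "?Q * P = 1\<^sub>m n" using 2 r by simp
qed

lemma pos_inv_ones: assumes "nonneg_mat Q" "Q \<in> carrier_mat n n" "P \<in> carrier_mat n n" "Q * P = 1\<^sub>m n" "i < n"
  shows "0 < (Q *\<^sub>v vec n (\<lambda>_. 1)) $ i"
proof (rule ccontr)
  assume "\<not> ?thesis"
  then have le: "(\<Sum>j=0..<n. Q $$ (i,j)) \<le> 0" using assms by (simp add: mv_entry[OF assms(2)] del: index_mult_mat_vec)
  have nn: "\<And>j. j < n \<Longrightarrow> 0 \<le> Q $$ (i,j)" using assms by (auto simp: nonneg_mat_def mat_le_def)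
  have "(\<Sum>j=0..<n. Q $$ (i,j)) = 0" using le nn by (meson antisym atLeastLessThan_iff sum_nonneg)
  then have z: "\<And>j. j < n \<Longrightarrow> Q $$ (i,j) = 0"
    using nn sum_nonneg_eq_0_iff[of "{0..<n}" "\<lambda>j. Q $$ (i,j)"] by auto
  have "(Q * P) $$ (i,i) = (\<Sum>j=0..<n. Q $$ (i,j) * P $$ (j,i))"
    using assms(1-3,5) by (simp add: scalar_prod_def)
  also have "\<dots> = 0" using z by simp
  finally have "(Q * P) $$ (i,i) = 0" .
  moreover have "(Q * P) $$ (i,i) = 1" using assms by simp
  ultimately show False by simp
qed

lemma rho_nonneg: assumes "B \<in> carrier_mat m m" "0 < m" shows "0 \<le> rho B"
proof -
  have C: "map_mat complex_of_real B \<in> carrier_mat m m" using assms by simp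
  from spectral_radius_mem_max(1)[OF C assms(2)] show ?thesis unfolding rho_def by auto
qed

lemma eig_le_rho_c: fixes B :: "real mat"
  assumes B: "B \<in> carrier_mat m m" and v: "v \<in> carrier_vec m" "v \<noteq> 0\<^sub>v m"
   and ev: "map_mat complex_of_real B *\<^sub>v v = c \<cdot>\<^sub>v v"
  shows "norm c \<le> rho B"
proof -
  let ?C = "map_mat complex_of_real B"
  have C: "?C \<in> carrier_mat m m" using B by simp
  have "eigenvector ?C v c" unfolding eigenvector_def using v ev C by auto
  hence e: "c \<in> spectrum ?C" unfolding spectrum_def eigenvalue_def by auto
  from v have m: "0 < m" by (cases m) auto
  from spectral_radius_mem_max(2)[OF C m] e show ?thesis unfolding rho_def by auto
qed

lemma eig_le_rho: fixes B :: "real mat"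
  assumes B: "B \<in> carrier_mat m m" and v: "v \<in> carrier_vec m" "v \<noteq> 0\<^sub>v m"
   and ev: "B *\<^sub>v v = c \<cdot>\<^sub>v v"
  shows "\<bar>c\<bar> \<le> rho B"
proof -
  have "eigenvector B v c" unfolding eigenvector_def using v ev B by auto
  from of_real_hom.eigenvector_hom[OF B this]
  have "eigenvector (map_mat complex_of_real B) (map_vec complex_of_real v) (complex_of_real c)" .
  hence "map_vec complex_of_real v \<in> carrier_vec m" "map_vec complex_of_real v \<noteq> 0\<^sub>v m"
    "map_mat complex_of_real B *\<^sub>v map_vec complex_of_real v = complex_of_real c \<cdot>\<^sub>v map_vec complex_of_real v"
    unfolding eigenvector_def using B by auto
  from eig_le_rho_c[OF B this] show ?thesis by simp
qed

lemma rho_le: fixes B :: "real mat"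
  assumes B: "B \<in> carrier_mat m m" "0 < m" "nonneg_mat B"
  and x: "x \<in> carrier_vec m" "\<And>i. i < m \<Longrightarrow> 0 < x $ i" "\<And>i. i < m \<Longrightarrow> (B *\<^sub>v x) $ i \<le> lam * x $ i"
  shows "rho B \<le> lam"
proof -
  let ?C = "map_mat complex_of_real B"
  have C: "?C \<in> carrier_mat m m" using B by simp
  from spectral_radius_mem_max(1)[OF C B(2)] obtain \<mu> where mu: "\<mu> \<in> spectrum ?C" "rho B = norm \<mu>"
    unfolding rho_def by auto
  from mu(1) obtain v where ev: "eigenvector ?C v \<mu>" unfolding spectrum_def eigenvalue_def by auto
  hence v: "v \<in> carrier_vec m" "v \<noteq> 0\<^sub>v m" "?C *\<^sub>v v = \<mu> \<cdot>\<^sub>v v" using C unfolding eigenvector_def by auto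
  define t where "t = Max ((\<lambda>j. norm (v $ j) / x $ j) ` {0..<m})"
  have tge: "norm (v $ j) \<le> t * x $ j" if j: "j < m" for j
  proof -
    have "norm (v $ j) / x $ j \<le> t" unfolding t_def using j by (intro Max_ge) auto
    thus ?thesis using x(2)[OF j] by (simp add: pos_divide_le_eq mult.commute)
  qed
  have "t \<in> (\<lambda>j. norm (v $ j) / x $ j) ` {0..<m}" unfolding t_def using B(2) by (intro Max_in) auto
  then obtain i where i: "i < m" "t = norm (v $ i) / x $ i" by auto
  have ti: "t * x $ i = norm (v $ i)" using i x(2)[OF i(1)] by simp
  obtain k where k: "k < m" "v $ k \<noteq> 0" using v(1,2) by (metis carrier_vecD eq_vecI index_zero_vec(1) index_zero_vec(2))
  have "0 < norm (v $ k)" using k by simp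
  also have "\<dots> \<le> t * x $ k" using tge k by simp
  finally have tpos: "0 < t" using x(2)[OF k(1)] by (simp add: zero_less_mult_iff)
  have Bnn: "\<And>j. j < m \<Longrightarrow> 0 \<le> B $$ (i,j)" using B i by (auto simp: nonneg_mat_def mat_le_def)
  have "norm \<mu> * norm (v $ i) = norm ((?C *\<^sub>v v) $ i)" using v(1) i by (simp add: v(3) norm_mult)
  also have "\<dots> = norm (\<Sum>j=0..<m. complex_of_real (B $$ (i,j)) * v $ j)"
    using mv_entry[OF C v(1) i(1)] B i by simp
  also have "\<dots> \<le> (\<Sum>j=0..<m. B $$ (i,j) * norm (v $ j))"
    by (rule order_trans[OF norm_sum]) (simp add: norm_mult Bnn)
  also have "\<dots> \<le> (\<Sum>j=0..<m. B $$ (i,j) * (t * x $ j))"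
    by (intro sum_mono mult_left_mono) (auto simp: tge Bnn)
  also have "\<dots> = t * (B *\<^sub>v x) $ i"
    using mv_entry[OF B(1) x(1) i(1)] by (simp add: sum_distrib_left algebra_simps)
  also have "\<dots> \<le> t * (lam * x $ i)" using x(3)[OF i(1)] tpos by simp
  also have "\<dots> = lam * norm (v $ i)" using ti by (simp add: algebra_simps)
  finally have le: "norm \<mu> * norm (v $ i) \<le> lam * norm (v $ i)" .
  have "0 < norm (v $ i)" using ti tpos x(2)[OF i(1)] by (metis mult_pos_pos)
  with le have "norm \<mu> \<le> lam" by simp
  with mu show ?thesis by simp
qed

lemma pow_nonneg: assumes "nonneg_mat B" "B \<in> carrier_mat m m"
  shows "nonneg_mat (B ^\<^sub>m k)"
proof (induct k)
  case 0 then show ?case using assms by (auto simp: nonneg_mat_def mat_le_def)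
next
  case (Suc k) then show ?case using nonneg_mult[OF Suc _ pow_carrier_mat[OF assms(2)] assms(2)] assms by simp
qed

lemma smult_pow: fixes B :: "'a :: comm_ring_1 mat" assumes "B \<in> carrier_mat m m"
  shows "(c \<cdot>\<^sub>m B) ^\<^sub>m k = (c ^ k) \<cdot>\<^sub>m (B ^\<^sub>m k)"
proof (induct k)
  case 0 then show ?case using assms by (auto intro!: eq_matI)
next
  case (Suc k)
  have "(c \<cdot>\<^sub>m B) ^\<^sub>m Suc k = ((c ^ k) \<cdot>\<^sub>m (B ^\<^sub>m k)) * (c \<cdot>\<^sub>m B)" using Suc by simp
  also have "\<dots> = (c ^ Suc k) \<cdot>\<^sub>m (B ^\<^sub>m Suc k)"
    using assms mult_smult_assoc_mat[OF pow_carrier_mat[OF assms] smult_carrier_mat[OF assms]]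
      mult_smult_distrib[OF pow_carrier_mat[OF assms] assms] by (auto simp: ac_simps intro!: eq_matI)
  finally show ?case .
qed

lemma neumann: fixes B :: "real mat"
  assumes B: "B \<in> carrier_mat m m" "0 < m" "nonneg_mat B" and r: "rho B < lam"
  and f: "f \<in> carrier_vec m" "\<And>i. i < m \<Longrightarrow> 0 \<le> f $ i"
  shows "\<exists>u \<in> carrier_vec m. (\<forall>i<m. (B *\<^sub>v u) $ i = lam * u $ i - f $ i) \<and> (\<forall>i<m. 0 \<le> u $ i)"
proof -
  have r0: "0 \<le> rho B" by (rule rho_nonneg[OF B(1,2)])
  have lpos: "0 < lam" using r r0 by simp
  define C where "C = mat m m (\<lambda>(i,j). (if i = j then lam else 0) - B $$ (i,j))"
  have Cc: "C \<in> carrier_mat m m" unfolding C_def by simp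
  have Cent: "(C *\<^sub>v w) $ i = lam * w $ i - (B *\<^sub>v w) $ i" if w: "w \<in> carrier_vec m" and i: "i < m" for w i
  proof -
    have "(C *\<^sub>v w) $ i = (\<Sum>j=0..<m. ((if i = j then lam else 0) - B $$ (i,j)) * w $ j)"
      unfolding mv_entry[OF Cc w i] using i by (intro sum.cong) (auto simp: C_def)
    also have "\<dots> = (\<Sum>j=0..<m. (if i = j then lam * w $ j else 0) - B $$ (i,j) * w $ j)"
      by (intro sum.cong) (auto simp: left_diff_distrib)
    also have "\<dots> = (\<Sum>j=0..<m. (if i = j then lam * w $ j else 0)) - (\<Sum>j=0..<m. B $$ (i,j) * w $ j)"
      by (rule sum_subtractf)
    also have "\<dots> = lam * w $ i - (\<Sum>j=0..<m. B $$ (i,j) * w $ j)"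
      using i by (simp add: sum.delta)
    also have "\<dots> = lam * w $ i - (B *\<^sub>v w) $ i" using i by (simp add: mv_entry[OF B(1) w i] del: index_mult_mat_vec)
    finally show ?thesis .
  qed
  have "det C \<noteq> 0"
  proof
    assume "det C = 0"
    from this[unfolded det_0_iff_vec_prod_zero_field[OF Cc]] obtain w where
      w: "w \<in> carrier_vec m" "w \<noteq> 0\<^sub>v m" "C *\<^sub>v w = 0\<^sub>v m" by auto
    have "B *\<^sub>v w = lam \<cdot>\<^sub>v w"
    proof (rule eq_vecI)
      fix i assume "i < dim_vec (lam \<cdot>\<^sub>v w)"
      hence i: "i < m" using w by simp
      have "(C *\<^sub>v w) $ i = 0" using w(3) i by simp
      thus "(B *\<^sub>v w) $ i = (lam \<cdot>\<^sub>v w) $ i" using Cent[OF w(1) i] i w(1) by simp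
    qed (use w B in simp)
    from eig_le_rho[OF B(1) w(1,2) this] r lpos show False by simp
  qed
  from det_non_zero_imp_unit[OF Cc this, of "()"] obtain Q where
    Q: "Q \<in> carrier_mat m m" "C * Q = 1\<^sub>m m"
    unfolding Units_def ring_mat_def by auto
  define u where "u = Q *\<^sub>v f"
  have u: "u \<in> carrier_vec m" unfolding u_def using Q f by simp
  have "C *\<^sub>v u = f" unfolding u_def using Q f Cc by (simp flip: assoc_mult_mat_vec)
  hence ueq: "(B *\<^sub>v u) $ i = lam * u $ i - f $ i" if i: "i < m" for i
    using Cent[OF u i] by simp
  define w where "w = vec m (\<lambda>i. max 0 (- u $ i))"
  have w: "w \<in> carrier_vec m" "\<And>i. i < m \<Longrightarrow> 0 \<le> w $ i" unfolding w_def by auto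
  have Bw: "lam * w $ i \<le> (B *\<^sub>v w) $ i" if i: "i < m" for i
  proof (cases "u $ i < 0")
    case True
    have "- (B *\<^sub>v u) $ i \<le> (B *\<^sub>v w) $ i"
    proof -
      have nn: "\<And>j. j < m \<Longrightarrow> 0 \<le> B $$ (i,j)" using B i by (auto simp: nonneg_mat_def mat_le_def)
      have "- (B *\<^sub>v u) $ i = (\<Sum>j=0..<m. B $$ (i,j) * (- u $ j))"
        by (simp add: mv_entry[OF B(1) u i] sum_negf)
      also have "\<dots> \<le> (\<Sum>j=0..<m. B $$ (i,j) * w $ j)"
        by (intro sum_mono mult_left_mono) (auto simp: w_def nn)
      finally show ?thesis by (simp add: mv_entry[OF B(1) w(1) i])
    qed
    moreover have "lam * w $ i = - lam * u $ i" using True i by (simp add: w_def)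
    ultimately show ?thesis using ueq[OF i] f(2)[OF i] by simp
  next
    case False
    then have "w $ i = 0" using i by (simp add: w_def)
    then show ?thesis using nonneg_mv[OF B(3,1) w(1) w(2) i] by simp
  qed
  have pw: "lam ^ k * w $ i \<le> ((B ^\<^sub>m k) *\<^sub>v w) $ i" if i: "i < m" for k i
    using i
  proof (induct k arbitrary: i)
    case 0 then show ?case using w B by simp
  next
    case (Suc k)
    have Bk: "B ^\<^sub>m k \<in> carrier_mat m m" using B by simp
    have "((B ^\<^sub>m Suc k) *\<^sub>v w) = (B ^\<^sub>m k) *\<^sub>v (B *\<^sub>v w)"
      using assoc_mult_mat_vec[OF Bk B(1) w(1)] by simp
    moreover have "lam * ((B ^\<^sub>m k) *\<^sub>v w) $ i \<le> ((B ^\<^sub>m k) *\<^sub>v (B *\<^sub>v w)) $ i"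
    proof -
      have "((B ^\<^sub>m k) *\<^sub>v (B *\<^sub>v w - lam \<cdot>\<^sub>v w)) $ i \<ge> 0"
        by (rule nonneg_mv[OF pow_nonneg[OF B(3,1)] Bk]) (use B w Bw Suc(2) in auto)
      moreover have "((B ^\<^sub>m k) *\<^sub>v (B *\<^sub>v w - lam \<cdot>\<^sub>v w)) $ i = 1 * ((B ^\<^sub>m k) *\<^sub>v (B *\<^sub>v w)) $ i + (- lam) * ((B ^\<^sub>m k) *\<^sub>v w) $ i + 0 * ((B ^\<^sub>m k) *\<^sub>v w) $ i"
        by (rule lincomb3[OF Bk]) (use B w Suc(2) in auto)
      ultimately show ?thesis by simp
    qed
    moreover have "lam ^ Suc k * w $ i \<le> lam * ((B ^\<^sub>m k) *\<^sub>v w) $ i"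
      using Suc(1)[OF Suc(2)] lpos by simp
    ultimately show ?case by simp
  qed
  define lam' where "lam' = (rho B + lam) / 2"
  have l': "rho B < lam'" "lam' < lam" "0 < lam'" using r r0 unfolding lam'_def by auto
  let ?CB = "map_mat complex_of_real B"
  define CD where "CD = complex_of_real (1 / lam') \<cdot>\<^sub>m ?CB"
  have CB: "?CB \<in> carrier_mat m m" using B by simp
  have CD: "CD \<in> carrier_mat m m" unfolding CD_def using B by simp
  have "spectral_radius CD < 1"
  proof -
    from spectral_radius_mem_max(1)[OF CD B(2)] obtain \<mu> where mu: "\<mu> \<in> spectrum CD" "spectral_radius CD = norm \<mu>"
      by auto
    from mu(1) obtain v where ev: "eigenvector CD v \<mu>" unfolding spectrum_def eigenvalue_def by auto
    hence v: "v \<in> carrier_vec m" "v \<noteq> 0\<^sub>v m" "CD *\<^sub>v v = \<mu> \<cdot>\<^sub>v v" using CD unfolding eigenvector_def by auto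
    have "?CB *\<^sub>v v = (complex_of_real lam' * \<mu>) \<cdot>\<^sub>v v"
    proof (rule eq_vecI)
      fix i assume "i < dim_vec ((complex_of_real lam' * \<mu>) \<cdot>\<^sub>v v)"
      hence i: "i < m" using v by simp
      have "(CD *\<^sub>v v) $ i = complex_of_real (1/lam') * (?CB *\<^sub>v v) $ i"
        unfolding mv_entry[OF CD v(1) i] mv_entry[OF CB v(1) i] using i
        using B by (auto simp: CD_def sum_distrib_left algebra_simps intro!: sum.cong)
      hence "\<mu> * v $ i = complex_of_real (1/lam') * (?CB *\<^sub>v v) $ i" using v(3) i v(1) by simp
      hence "complex_of_real lam' * (\<mu> * v $ i) = (?CB *\<^sub>v v) $ i" using l'(3)
        by (simp add: field_simps flip: of_real_mult)
      thus "(?CB *\<^sub>v v) $ i = ((complex_of_real lam' * \<mu>) \<cdot>\<^sub>v v) $ i" using i v(1) by (simp add: mult.assoc)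
    qed (use v B in simp)
    from eig_le_rho_c[OF B(1) v(1,2) this] have "lam' * norm \<mu> \<le> rho B" using l'(3) by (simp add: norm_mult)
    with l'(1) have "lam' * norm \<mu> < lam' * 1" by linarith
    hence "norm \<mu> < 1" using l'(3) by (simp only: mult_less_cancel_left_pos)
    with mu show ?thesis by simp
  qed
  from spectral_radius_jnf_norm_bound_less_1_upper_triangular[OF CD this] obtain c where
    c: "\<And>k. norm_bound (CD ^\<^sub>m k) c" by auto
  have Bk_le: "(B ^\<^sub>m k) $$ (i,j) \<le> \<bar>c\<bar> * lam' ^ k" if ij: "i < m" "j < m" for i j k
  proof -
    have "CD ^\<^sub>m k = complex_of_real ((1/lam') ^ k) \<cdot>\<^sub>m map_mat complex_of_real (B ^\<^sub>m k)"
      unfolding CD_def smult_pow[OF CB] of_real_hom.mat_hom_pow[OF B(1)] by simp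
    hence e: "(CD ^\<^sub>m k) $$ (i,j) = complex_of_real ((1/lam') ^ k) * complex_of_real ((B ^\<^sub>m k) $$ (i,j))"
      using ij B by simp
    have dims: "i < dim_row (CD ^\<^sub>m k)" "j < dim_col (CD ^\<^sub>m k)" using CD ij by auto
    from c[of k] dims have "norm ((CD ^\<^sub>m k) $$ (i,j)) \<le> c" unfolding norm_bound_def by blast
    hence "norm (complex_of_real ((1/lam') ^ k) * complex_of_real ((B ^\<^sub>m k) $$ (i,j))) \<le> c"
      by (simp only: e)
    hence "\<bar>(1/lam') ^ k\<bar> * \<bar>(B ^\<^sub>m k) $$ (i,j)\<bar> \<le> c" by (simp only: norm_mult norm_of_real)
    hence "(1/lam') ^ k * \<bar>(B ^\<^sub>m k) $$ (i,j)\<bar> \<le> c" using l'(3) by simp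
    hence "\<bar>(B ^\<^sub>m k) $$ (i,j)\<bar> \<le> c * lam' ^ k" using l'(3) by (simp add: field_simps)
    moreover have "c * lam' ^ k \<le> \<bar>c\<bar> * lam' ^ k" using l'(3) by (intro mult_right_mono) auto
    ultimately show ?thesis by linarith
  qed
  define S where "S = (\<Sum>j=0..<m. w $ j)"
  have S0: "0 \<le> S" unfolding S_def using w by (auto intro: sum_nonneg)
  have wbound: "lam ^ k * w $ i \<le> \<bar>c\<bar> * lam' ^ k * S" if i: "i < m" for i k
  proof -
    have "lam ^ k * w $ i \<le> ((B ^\<^sub>m k) *\<^sub>v w) $ i" by (rule pw[OF i])
    also have "\<dots> = (\<Sum>j=0..<m. (B ^\<^sub>m k) $$ (i,j) * w $ j)"
      by (rule mv_entry[OF pow_carrier_mat[OF B(1)] w(1) i])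
    also have "\<dots> \<le> (\<Sum>j=0..<m. (\<bar>c\<bar> * lam' ^ k) * w $ j)"
      by (intro sum_mono mult_right_mono) (auto simp: Bk_le i w(2))
    also have "\<dots> = \<bar>c\<bar> * lam' ^ k * S" unfolding S_def by (simp add: sum_distrib_left)
    finally show ?thesis .
  qed
  have w0: "w $ i = 0" if i: "i < m" for i
  proof (rule ccontr)
    assume "w $ i \<noteq> 0"
    with w(2)[OF i] have wp: "0 < w $ i" by simp
    have q: "lam' / lam < 1" using l' lpos by simp
    obtain k where k: "(lam' / lam) ^ k < w $ i / (\<bar>c\<bar> * S + 1)"
      using real_arch_pow_inv[OF _ q, of "w $ i / (\<bar>c\<bar> * S + 1)"] wp S0
      by (metis abs_ge_zero add_pos_nonneg divide_pos_pos less_add_one mult_nonneg_nonneg order_le_less_trans zero_less_one)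
    have pos: "0 < \<bar>c\<bar> * S + 1" using S0 by (simp add: add_nonneg_pos)
    have "w $ i \<le> \<bar>c\<bar> * S * (lam' / lam) ^ k"
    proof -
      have "lam ^ k * w $ i \<le> \<bar>c\<bar> * S * (lam' ^ k)" using wbound[OF i, of k] by (simp add: ac_simps)
      hence "w $ i \<le> \<bar>c\<bar> * S * lam' ^ k / lam ^ k" using lpos by (simp add: field_simps)
      thus ?thesis by (simp add: power_divide)
    qed
    also have "\<dots> \<le> (\<bar>c\<bar> * S + 1) * (lam' / lam) ^ k"
      using l' lpos by (intro mult_right_mono) auto
    also have "\<dots> < (\<bar>c\<bar> * S + 1) * (w $ i / (\<bar>c\<bar> * S + 1))"
      using k pos by (intro mult_strict_left_mono) auto
    also have "\<dots> = w $ i" using pos by simp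
    finally show False by simp
  qed
  have "0 \<le> u $ i" if i: "i < m" for i
    using w0[OF i] i by (simp add: w_def)
  with u ueq show ?thesis by blast
qed

lemma uminus_mv: fixes M :: "real mat" assumes "M \<in> carrier_mat r c" "w \<in> carrier_vec c" "i < r"
  shows "((- M) *\<^sub>v w) $ i = - (M *\<^sub>v w) $ i"
proof -
  have "((- M) *\<^sub>v w) $ i = (\<Sum>j=0..<c. (- M) $$ (i,j) * w $ j)"
    by (rule mv_entry) (use assms in auto)
  also have "\<dots> = (\<Sum>j=0..<c. - (M $$ (i,j) * w $ j))" using assms by (intro sum.cong) auto
  also have "\<dots> = - (M *\<^sub>v w) $ i" by (simp add: sum_negf mv_entry[OF assms] del: index_mult_mat_vec)
  finally show ?thesis .
qed

lemma minus_mv: fixes M :: "real mat" assumes "M \<in> carrier_mat r c" "N \<in> carrier_mat r c" "w \<in> carrier_vec c" "i < r"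
  shows "((M - N) *\<^sub>v w) $ i = (M *\<^sub>v w) $ i - (N *\<^sub>v w) $ i"
proof -
  have "((M - N) *\<^sub>v w) $ i = (\<Sum>j=0..<c. (M - N) $$ (i,j) * w $ j)"
    by (rule mv_entry) (use assms in auto)
  also have "\<dots> = (\<Sum>j=0..<c. M $$ (i,j) * w $ j - N $$ (i,j) * w $ j)" using assms
    by (intro sum.cong) (auto simp: left_diff_distrib)
  also have "\<dots> = (M *\<^sub>v w) $ i - (N *\<^sub>v w) $ i"
    by (simp add: sum_subtractf mv_entry[OF assms(1,3,4)] mv_entry[OF assms(2,3,4)] del: index_mult_mat_vec)
  finally show ?thesis .
qed

lemma nonneg_block: assumes "nonneg_mat X" "nonneg_mat Y" "X \<in> carrier_mat n n" "Y \<in> carrier_mat n n"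
  shows "nonneg_mat (four_block_mat X Y (1\<^sub>m n) (0\<^sub>m n n))"
  using assms by (auto simp: nonneg_mat_def mat_le_def)

lemma le_block: assumes "mat_le X X'" "mat_le Y Y'" "X \<in> carrier_mat n n" "Y \<in> carrier_mat n n"
  "X' \<in> carrier_mat n n" "Y' \<in> carrier_mat n n"
  shows "mat_le (four_block_mat X Y (1\<^sub>m n) (0\<^sub>m n n)) (four_block_mat X' Y' (1\<^sub>m n) (0\<^sub>m n n))"
  using assms by (auto simp: mat_le_def)

lemma nonpos_uminus: "nonpos_mat M \<Longrightarrow> nonneg_mat (- M)"
  by (auto simp: nonneg_mat_def nonpos_mat_def mat_le_def)

lemma nonneg_minus: assumes "nonneg_mat M" "nonpos_mat N" "M \<in> carrier_mat r c" "N \<in> carrier_mat r c"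
  shows "nonneg_mat (M - N)"
  using assms unfolding nonneg_mat_def nonpos_mat_def mat_le_def by (auto, smt (verit))

lemma nonpos_mult_nonneg: assumes "nonpos_mat A" "nonneg_mat B" "A \<in> carrier_mat r k" "B \<in> carrier_mat k c"
  shows "nonpos_mat (A * B)"
  using assms by (auto simp: nonneg_mat_def nonpos_mat_def mat_le_def scalar_prod_def intro!: sum_nonpos mult_nonpos_nonneg)

lemma nonpos_mult_nonpos: assumes "nonpos_mat A" "nonpos_mat B" "A \<in> carrier_mat r k" "B \<in> carrier_mat k c"
  shows "nonneg_mat (A * B)"
  using assms by (auto simp: nonneg_mat_def nonpos_mat_def mat_le_def scalar_prod_def intro!: sum_nonneg mult_nonpos_nonpos)

lemma arithA: fixes a b c lam :: real
  assumes "0 \<le> a" "a \<le> c" "b \<le> 0" "- b \<le> c" "1 \<le> c" "lam = 1 - 1/(8*c)"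
  shows "0 \<le> lam^2 - lam*(1-lam)*a + (1-lam^2)*b"
proof -
  define d where "d = 1/(8*c)"
  have d: "d * c = 1/8" "0 < d" "d \<le> 1/8" using assms(5) unfolding d_def by (auto simp: field_simps)
  have l: "lam = 1 - d" using assms(6) d_def by simp
  have 1: "(1-d)*d*a \<le> d*c"
  proof -
    have "(1-d)*(d*a) \<le> 1*(d*a)" using d assms(1) by (intro mult_right_mono) auto
    hence "(1-d)*d*a \<le> d*a" by (simp add: mult.assoc)
    also have "\<dots> \<le> d*c" using d assms(2) by simp
    finally show ?thesis .
  qed
  have 2: "d*(2-d)*(-b) \<le> 2*d*c"
  proof -
    have "d*(2-d)*(-b) \<le> d*2*(-b)" using d assms(3) by (intro mult_right_mono mult_left_mono) auto
    also have "\<dots> = 2*(d*(-b))" by simp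
    also have "\<dots> \<le> 2*(d*c)" using d assms(4) by (intro mult_left_mono) auto
    also have "\<dots> = 2*d*c" by simp
    finally show ?thesis .
  qed
  have 3: "(1-d)^2 \<ge> 49/64"
  proof -
    have "7/8 \<le> 1 - d" using d by simp
    hence "(7/8)^2 \<le> (1-d)^2" by (rule power_mono) simp
    thus ?thesis by (simp add: power2_eq_square)
  qed
  have e: "1 - (1-d)^2 = d*(2-d)" by (simp add: power2_eq_square algebra_simps)
  have "lam^2 - lam*(1-lam)*a + (1-lam^2)*b = (1-d)^2 - (1-d)*d*a - d*(2-d)*(-b)"
    unfolding l by (simp add: power2_eq_square algebra_simps)
  thus ?thesis using 1 2 3 d by linarith
qed
theorem corollary3p7:
  fixes n :: nat and A P1 R1 S1 P2 R2 S2 :: "real mat"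
  assumes "0 < n"
    and "A \<in> carrier_mat n n"
    and "monotone_mat A"
    and "double_weak_regular_splitting n A P1 R1 S1"
    and "double_regular_splitting n A P2 R2 S2"
    and "(1::real) \<notin> spectrum (S2 * mat_inv P1)"
    and "monotone_mat ((1\<^sub>m n - S2 * mat_inv P1) * A)"
    and "mat_le (mat_inv P2 * R2) (mat_inv P1 * R1)"
    and "mat_le (mat_inv P1 * S1) (mat_inv P2 * S2)"
  shows "rho (four_block_mat
                (mat_inv P2 * R2 - mat_inv P2 * S2 * mat_inv P1 * R1)
                (mat_inv P2 * S2 * mat_inv P1 * S1)
                (1\<^sub>m n) (0\<^sub>m n n))
           \<le> min (rho (four_block_mat (mat_inv P1 * R1) (- (mat_inv P1 * S1)) (1\<^sub>m n) (0\<^sub>m n n)))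
                 (rho (four_block_mat (mat_inv P2 * R2) (- (mat_inv P2 * S2)) (1\<^sub>m n) (0\<^sub>m n n)))
       \<and> min (rho (four_block_mat (mat_inv P1 * R1) (- (mat_inv P1 * S1)) (1\<^sub>m n) (0\<^sub>m n n)))
             (rho (four_block_mat (mat_inv P2 * R2) (- (mat_inv P2 * S2)) (1\<^sub>m n) (0\<^sub>m n n))) < 1"
  proof -
  note dw = assms(4)[unfolded double_weak_regular_splitting_def double_splitting_def]
  note dr = assms(5)[unfolded double_regular_splitting_def double_splitting_def]
  have A: "A \<in> carrier_mat n n" by fact
  have P1: "P1 \<in> carrier_mat n n" and R1: "R1 \<in> carrier_mat n n" and S1: "S1 \<in> carrier_mat n n"
    and A1: "A = P1 - R1 + S1" and iP1: "invertible_mat P1" and Q1nn: "nonneg_mat (mat_inv P1)"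
    and H1nn: "nonneg_mat (mat_inv P1 * R1)" and K1np: "nonpos_mat (mat_inv P1 * S1)" using dw by auto
  have P2: "P2 \<in> carrier_mat n n" and R2: "R2 \<in> carrier_mat n n" and S2: "S2 \<in> carrier_mat n n"
    and A2: "A = P2 - R2 + S2" and iP2: "invertible_mat P2" and Q2nn: "nonneg_mat (mat_inv P2)"
    and R2nn: "nonneg_mat R2" and S2np: "nonpos_mat S2" using dr by auto
  define Q1 where "Q1 = mat_inv P1"
  define Q2 where "Q2 = mat_inv P2"
  define Ai where "Ai = mat_inv A"
  have Q1: "Q1 \<in> carrier_mat n n" "P1 * Q1 = 1\<^sub>m n" "Q1 * P1 = 1\<^sub>m n" unfolding Q1_def using mat_inv_props[OF iP1 P1] by auto
  have Q2: "Q2 \<in> carrier_mat n n" "P2 * Q2 = 1\<^sub>m n" "Q2 * P2 = 1\<^sub>m n" unfolding Q2_def using mat_inv_props[OF iP2 P2] by auto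
  have Ai: "Ai \<in> carrier_mat n n" "A * Ai = 1\<^sub>m n" "Ai * A = 1\<^sub>m n" "nonneg_mat Ai"
    unfolding Ai_def using mat_inv_props[of A n] assms(3) A by (auto simp: monotone_mat_def)
  define H1 where "H1 = Q1 * R1"
  define K1 where "K1 = Q1 * S1"
  define H2 where "H2 = Q2 * R2"
  define K2 where "K2 = Q2 * S2"
  have H1: "H1 \<in> carrier_mat n n" "nonneg_mat H1" unfolding H1_def Q1_def using H1nn Q1 R1 Q1_def by auto
  have K1: "K1 \<in> carrier_mat n n" "nonpos_mat K1" unfolding K1_def Q1_def using K1np Q1 S1 Q1_def by auto
  have H2: "H2 \<in> carrier_mat n n" "nonneg_mat H2" unfolding H2_def using nonneg_mult[OF _ R2nn Q2(1) R2] Q2nn Q2 R2 Q2_def by auto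
  have K2: "K2 \<in> carrier_mat n n" "nonpos_mat K2" unfolding K2_def using nonpos_mult[OF _ S2np Q2(1) S2] Q2nn Q2 S2 Q2_def by auto
  have X: "mat_inv P2 * S2 * mat_inv P1 * R1 = K2 * H1"
    unfolding K2_def H1_def Q1_def[symmetric] Q2_def[symmetric]
    by (rule assoc_mult_mat[OF mult_carrier_mat[OF Q2(1) S2] Q1(1) R1])
  have Y: "mat_inv P2 * S2 * mat_inv P1 * S1 = K2 * K1"
    unfolding K2_def K1_def Q1_def[symmetric] Q2_def[symmetric]
    by (rule assoc_mult_mat[OF mult_carrier_mat[OF Q2(1) S2] Q1(1) S1])
  define T1 where "T1 = four_block_mat H1 (- K1) (1\<^sub>m n) (0\<^sub>m n n)"
  define T2 where "T2 = four_block_mat H2 (- K2) (1\<^sub>m n) (0\<^sub>m n n)"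
  define W where "W = four_block_mat (H2 - K2 * H1) (K2 * K1) (1\<^sub>m n) (0\<^sub>m n n)"
  have T1c: "T1 \<in> carrier_mat (n+n) (n+n)" unfolding T1_def using H1 K1 by auto
  have T2c: "T2 \<in> carrier_mat (n+n) (n+n)" unfolding T2_def using H2 K2 by auto
  have Wc: "W \<in> carrier_mat (n+n) (n+n)" unfolding W_def using H1 K1 H2 K2 by auto
  have T1nn: "nonneg_mat T1" unfolding T1_def using H1 K1 by (intro nonneg_block nonpos_uminus) auto
  have T2nn: "nonneg_mat T2" unfolding T2_def using H2 K2 by (intro nonneg_block nonpos_uminus) auto
  have Wnn: "nonneg_mat W" unfolding W_def using H1 K1 H2 K2
    by (intro nonneg_block nonneg_minus nonpos_mult_nonneg nonpos_mult_nonpos) auto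
  have T21: "mat_le T2 T1" unfolding T1_def T2_def H1_def H2_def K1_def K2_def Q1_def Q2_def
    using assms(8,9) H1 H2 K1 K2 unfolding H1_def H2_def K1_def K2_def Q1_def Q2_def
    by (intro le_block) (auto simp: mat_le_def)
  have nn2: "0 < n + n" using assms(1) by simp
  define e where "e = vec n (\<lambda>_. 1 :: real)"
  have e: "e \<in> carrier_vec n" unfolding e_def by simp
  have rT2: "rho T2 < 1"
  proof -
    define y0 where "y0 = Ai *\<^sub>v e"
    have y0: "y0 \<in> carrier_vec n" unfolding y0_def using Ai e by simp
    have y0p: "\<And>i. i < n \<Longrightarrow> 0 < y0 $ i" unfolding y0_def e_def by (rule pos_inv_ones[OF Ai(4,1) A Ai(3)])
    have Ay0: "A *\<^sub>v y0 = e" unfolding y0_def using Ai A e by (simp flip: assoc_mult_mat_vec)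
    define a where "a = R2 *\<^sub>v y0"
    define b where "b = S2 *\<^sub>v y0"
    have a: "\<And>j. j < n \<Longrightarrow> 0 \<le> a $ j" unfolding a_def using y0 y0p R2 R2nn by (intro nonneg_mv) (auto simp: less_imp_le)
    have b: "\<And>j. j < n \<Longrightarrow> b $ j \<le> 0" unfolding b_def using y0 y0p S2 S2np by (intro nonpos_mv) (auto simp: less_imp_le)
    define c0 where "c0 = 1 + (\<Sum>j=0..<n. a $ j - b $ j)"
    have c0: "1 \<le> c0" "\<And>j. j < n \<Longrightarrow> a $ j \<le> c0" "\<And>j. j < n \<Longrightarrow> - b $ j \<le> c0"
    proof -
      have s: "\<And>j. j < n \<Longrightarrow> a $ j - b $ j \<le> (\<Sum>j=0..<n. a $ j - b $ j)"
        using a b by (intro member_le_sum) (auto, smt (verit))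
      have "0 \<le> (\<Sum>j=0..<n. a $ j - b $ j)" using a b by (intro sum_nonneg) (auto, smt (verit))
      thus "1 \<le> c0" unfolding c0_def by simp
      show "\<And>j. j < n \<Longrightarrow> a $ j \<le> c0" unfolding c0_def using s a b by (smt (verit))
      show "\<And>j. j < n \<Longrightarrow> - b $ j \<le> c0" unfolding c0_def using s a b by (smt (verit))
    qed
    define lam where "lam = 1 - 1/(8*c0)"
    have lam: "lam < 1" "0 < lam" using c0(1) unfolding lam_def by (auto simp: field_simps)
    define x where "x = (lam \<cdot>\<^sub>v y0) @\<^sub>v y0"
    have x: "x \<in> carrier_vec (n+n)" unfolding x_def using y0 by auto
    have xp: "\<And>i. i < n + n \<Longrightarrow> 0 < x $ i" unfolding x_def using y0 y0p lam by auto
    have Tx: "T2 *\<^sub>v x = (H2 *\<^sub>v (lam \<cdot>\<^sub>v y0) + (- K2) *\<^sub>v y0) @\<^sub>v (1\<^sub>m n *\<^sub>v (lam \<cdot>\<^sub>v y0) + 0\<^sub>m n n *\<^sub>v y0)"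
      unfolding T2_def x_def using H2 K2 y0 by (intro four_block_mat_mult_vec) auto
    have "(T2 *\<^sub>v x) $ i \<le> lam * x $ i" if i: "i < n + n" for i
    proof (cases "i < n")
      case True
      have H2l: "(H2 *\<^sub>v (lam \<cdot>\<^sub>v y0)) $ i = lam * (H2 *\<^sub>v y0) $ i"
        using mult_mat_vec[OF H2(1) y0] True H2 by simp
      have lhs: "(T2 *\<^sub>v x) $ i = lam * (H2 *\<^sub>v y0) $ i - (K2 *\<^sub>v y0) $ i"
        unfolding Tx using True H2 K2 y0 H2l uminus_mv[OF K2(1) y0 True] by simp
      define w where "w = vec n (\<lambda>j. lam^2 * (P2 *\<^sub>v y0) $ j - lam * (R2 *\<^sub>v y0) $ j + (S2 *\<^sub>v y0) $ j)"
      have w: "w \<in> carrier_vec n" unfolding w_def by simp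
      have Qw: "(Q2 *\<^sub>v w) $ i = lam^2 * (Q2 *\<^sub>v (P2 *\<^sub>v y0)) $ i + (- lam) * (Q2 *\<^sub>v (R2 *\<^sub>v y0)) $ i + 1 * (Q2 *\<^sub>v (S2 *\<^sub>v y0)) $ i"
        by (rule lincomb3[OF Q2(1) w]) (use P2 R2 S2 y0 True in \<open>auto simp: w_def\<close>)
      have "Q2 *\<^sub>v (P2 *\<^sub>v y0) = y0" using Q2 P2 y0 by (simp flip: assoc_mult_mat_vec)
      moreover have "Q2 *\<^sub>v (R2 *\<^sub>v y0) = H2 *\<^sub>v y0" unfolding H2_def using Q2 R2 y0 by (simp flip: assoc_mult_mat_vec)
      moreover have "Q2 *\<^sub>v (S2 *\<^sub>v y0) = K2 *\<^sub>v y0" unfolding K2_def using Q2 S2 y0 by (simp flip: assoc_mult_mat_vec)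
      ultimately have Qw': "(Q2 *\<^sub>v w) $ i = lam^2 * y0 $ i - lam * (H2 *\<^sub>v y0) $ i + (K2 *\<^sub>v y0) $ i"
        using Qw by simp
      have wnn: "0 \<le> w $ j" if j: "j < n" for j
      proof -
        have "(A *\<^sub>v y0) $ j = (P2 *\<^sub>v y0) $ j - (R2 *\<^sub>v y0) $ j + (S2 *\<^sub>v y0) $ j"
          by (rule sum3_mat_entry[OF A2 P2 R2 S2 y0 j])
        hence "(P2 *\<^sub>v y0) $ j = 1 + a $ j - b $ j" using Ay0 j unfolding a_def b_def e_def by simp
        hence "w $ j = lam^2 * (1 + a $ j - b $ j) - lam * a $ j + b $ j"
          using j unfolding w_def a_def b_def by simp
        also have "\<dots> = lam^2 - lam*(1-lam)*(a $ j) + (1-lam^2)*(b $ j)"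
          by (simp add: algebra_simps power2_eq_square)
        also have "\<dots> \<ge> 0" by (rule arithA[OF a[OF j] c0(2)[OF j] b[OF j] c0(3)[OF j] c0(1) lam_def])
        finally show ?thesis .
      qed
      have "0 \<le> (Q2 *\<^sub>v w) $ i" using Q2nn Q2 w wnn True unfolding Q2_def by (intro nonneg_mv) auto
      then show ?thesis using lhs Qw' True x_def y0 by (simp add: power2_eq_square)
    next
      case False
      have "(T2 *\<^sub>v x) $ i = lam * y0 $ (i - n)" unfolding Tx using False i H2 K2 y0 by simp
      then show ?thesis using False i y0 unfolding x_def by simp
    qed
    from rho_le[OF T2c nn2 T2nn x xp this] lam show ?thesis by simp
  qed
  have r21: "rho T2 \<le> rho T1"
  proof (rule dense_ge)
    fix lam assume lam: "rho T1 < lam"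
    have lpos: "0 < lam" using rho_nonneg[OF T1c nn2] lam by simp
    define f where "f = vec (n+n) (\<lambda>_. 1 :: real)"
    have f: "f \<in> carrier_vec (n+n)" "\<And>i. i < n + n \<Longrightarrow> 0 \<le> f $ i" unfolding f_def by auto
    from neumann[OF T1c nn2 T1nn lam f] obtain u where u: "u \<in> carrier_vec (n+n)"
      "\<And>i. i < n+n \<Longrightarrow> (T1 *\<^sub>v u) $ i = lam * u $ i - f $ i" "\<And>i. i < n+n \<Longrightarrow> 0 \<le> u $ i" by blast
    have up: "0 < u $ i" if i: "i < n+n" for i
    proof -
      have "0 \<le> (T1 *\<^sub>v u) $ i" using T1nn T1c u i by (intro nonneg_mv) auto
      hence "1 \<le> lam * u $ i" using u(2)[OF i] i by (simp add: f_def)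
      thus ?thesis using lpos by (smt (verit) mult_nonneg_nonpos)
    qed
    have "(T2 *\<^sub>v u) $ i \<le> lam * u $ i" if i: "i < n+n" for i
    proof -
      have "(T2 *\<^sub>v u) $ i \<le> (T1 *\<^sub>v u) $ i" using T21 T2c T1c u i by (intro mat_le_mv) auto
      thus ?thesis using u(2)[OF i] i by (simp add: f_def)
    qed
    from rho_le[OF T2c nn2 T2nn u(1) up this] show "rho T2 \<le> lam" .
  qed
  have rW: "rho W \<le> lam" if lam: "rho T2 < lam" "lam < 1" for lam
  proof -
    have lpos: "0 < lam" using rho_nonneg[OF T2c nn2] lam by simp
    define v where "v = Q2 *\<^sub>v e"
    have v: "v \<in> carrier_vec n" unfolding v_def using Q2 e by simp
    have vp: "\<And>i. i < n \<Longrightarrow> 0 < v $ i" unfolding v_def e_def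
      by (rule pos_inv_ones[OF _ Q2(1) P2 Q2(3)]) (use Q2nn Q2_def in simp)
    define f where "f = v @\<^sub>v 0\<^sub>v n"
    have f: "f \<in> carrier_vec (n+n)" "\<And>i. i < n + n \<Longrightarrow> 0 \<le> f $ i" unfolding f_def using v vp
      by (auto simp: less_imp_le)
    from neumann[OF T2c nn2 T2nn lam(1) f] obtain u where u: "u \<in> carrier_vec (n+n)"
      "\<And>i. i < n+n \<Longrightarrow> (T2 *\<^sub>v u) $ i = lam * u $ i - f $ i" "\<And>i. i < n+n \<Longrightarrow> 0 \<le> u $ i" by blast
    define u1 where "u1 = vec n (\<lambda>i. u $ i)"
    define y where "y = vec n (\<lambda>i. u $ (n + i))"
    have u1: "u1 \<in> carrier_vec n" and y: "y \<in> carrier_vec n" unfolding u1_def y_def by auto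
    have uu: "u = u1 @\<^sub>v y"
      by (rule eq_vecI) (use u in \<open>auto simp: u1_def y_def\<close>)
    have Tu: "T2 *\<^sub>v u = (H2 *\<^sub>v u1 + (- K2) *\<^sub>v y) @\<^sub>v (1\<^sub>m n *\<^sub>v u1 + 0\<^sub>m n n *\<^sub>v y)"
      unfolding T2_def uu using H2 K2 u1 y by (intro four_block_mat_mult_vec) auto
    have top: "(H2 *\<^sub>v u1) $ i - (K2 *\<^sub>v y) $ i = lam * u1 $ i - v $ i" if i: "i < n" for i
    proof -
      have "(T2 *\<^sub>v u) $ i = (H2 *\<^sub>v u1) $ i - (K2 *\<^sub>v y) $ i"
        unfolding Tu using i H2 K2 u1 y uminus_mv[OF K2(1) y i] by simp
      moreover have "(T2 *\<^sub>v u) $ i = lam * u1 $ i - v $ i" using u(2)[of i] i v unfolding f_def u1_def by simp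
      ultimately show ?thesis by simp
    qed
    have bot: "u1 $ i = lam * y $ i" if i: "i < n" for i
    proof -
      have "(T2 *\<^sub>v u) $ (n + i) = u1 $ i" unfolding Tu using i H2 K2 u1 y by simp
      moreover have "(T2 *\<^sub>v u) $ (n + i) = lam * y $ i" using u(2)[of "n+i"] i v unfolding f_def y_def by simp
      ultimately show ?thesis by simp
    qed
    have u1y: "u1 = lam \<cdot>\<^sub>v y" by (rule eq_vecI) (use bot u1 y in auto)
    have u1p: "0 < u1 $ i" if i: "i < n" for i
    proof -
      have "0 \<le> (T2 *\<^sub>v u) $ i" using u i by (intro nonneg_mv[OF T2nn T2c]) auto
      hence "v $ i \<le> lam * u1 $ i" using u(2)[of i] i v unfolding f_def u1_def by simp
      thus ?thesis using vp[OF i] lpos by (smt (verit) mult_nonneg_nonpos)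
    qed
    have yp: "0 < y $ i" if i: "i < n" for i using u1p[OF i] bot[OF i] lpos by (smt (verit) mult_nonneg_nonpos)
    have yn: "\<And>i. i < n \<Longrightarrow> 0 \<le> y $ i" using yp less_imp_le by blast
    have H2u1: "H2 *\<^sub>v u1 = lam \<cdot>\<^sub>v (H2 *\<^sub>v y)" unfolding u1y by (rule mult_mat_vec[OF H2(1) y])
    have F1: "lam * (H2 *\<^sub>v y) $ i - (K2 *\<^sub>v y) $ i = lam * lam * y $ i - v $ i" if i: "i < n" for i
      using top[OF i] H2u1 i H2 bot[OF i] by simp
    define zz where "zz = vec n (\<lambda>j. lam * lam * y $ j + (- lam) * (H2 *\<^sub>v y) $ j + 1 * (K2 *\<^sub>v y) $ j)"
    have zz: "zz = v"
    proof (rule eq_vecI)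
      fix i assume "i < dim_vec v"
      hence i: "i < n" using v by simp
      show "zz $ i = v $ i" using F1[OF i] i unfolding zz_def by simp
    qed (use v in \<open>simp add: zz_def\<close>)
    have P2v: "P2 *\<^sub>v v = e" unfolding v_def using P2 Q2 e by (simp flip: assoc_mult_mat_vec)
    have P2H2: "P2 *\<^sub>v (H2 *\<^sub>v y) = R2 *\<^sub>v y"
    proof -
      have "P2 *\<^sub>v (H2 *\<^sub>v y) = (P2 * (Q2 * R2)) *\<^sub>v y" unfolding H2_def
        by (rule assoc_mult_mat_vec[symmetric, OF P2 mult_carrier_mat[OF Q2(1) R2] y])
      also have "P2 * (Q2 * R2) = (P2 * Q2) * R2" by (rule assoc_mult_mat[symmetric, OF P2 Q2(1) R2])
      also have "\<dots> = R2" using Q2(2) R2 by simp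
      finally show ?thesis .
    qed
    have P2K2: "P2 *\<^sub>v (K2 *\<^sub>v y) = S2 *\<^sub>v y"
    proof -
      have "P2 *\<^sub>v (K2 *\<^sub>v y) = (P2 * (Q2 * S2)) *\<^sub>v y" unfolding K2_def
        by (rule assoc_mult_mat_vec[symmetric, OF P2 mult_carrier_mat[OF Q2(1) S2] y])
      also have "P2 * (Q2 * S2) = (P2 * Q2) * S2" by (rule assoc_mult_mat[symmetric, OF P2 Q2(1) S2])
      also have "\<dots> = S2" using Q2(2) S2 by simp
      finally show ?thesis .
    qed
    have M: "lam * lam * (P2 *\<^sub>v y) $ j - lam * (R2 *\<^sub>v y) $ j + (S2 *\<^sub>v y) $ j = 1" if j: "j < n" for j
    proof -
      have "(P2 *\<^sub>v zz) $ j = lam * lam * (P2 *\<^sub>v y) $ j + (- lam) * (P2 *\<^sub>v (H2 *\<^sub>v y)) $ j + 1 * (P2 *\<^sub>v (K2 *\<^sub>v y)) $ j"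
        by (rule lincomb3[OF P2]) (use y H2 K2 j in \<open>auto simp: zz_def\<close>)
      thus ?thesis using P2v zz P2H2 P2K2 j by (simp add: e_def)
    qed
    have Ay: "0 \<le> (A *\<^sub>v y) $ j" if j: "j < n" for j
    proof -
      have a: "(A *\<^sub>v y) $ j = (P2 *\<^sub>v y) $ j - (R2 *\<^sub>v y) $ j + (S2 *\<^sub>v y) $ j"
        by (rule sum3_mat_entry[OF A2 P2 R2 S2 y j])
      have r: "0 \<le> (R2 *\<^sub>v y) $ j" using R2nn R2 y yn j by (intro nonneg_mv) auto
      have s: "(S2 *\<^sub>v y) $ j \<le> 0" using S2np S2 y yn j by (intro nonpos_mv) auto
      have a2: "lam * lam * (A *\<^sub>v y) $ j = lam * lam * (P2 *\<^sub>v y) $ j - lam * lam * (R2 *\<^sub>v y) $ j + lam * lam * (S2 *\<^sub>v y) $ j"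
        unfolding a by (simp add: algebra_simps)
      have a3: "lam * lam * (A *\<^sub>v y) $ j = 1 + lam * (R2 *\<^sub>v y) $ j - lam * lam * (R2 *\<^sub>v y) $ j - (S2 *\<^sub>v y) $ j + lam * lam * (S2 *\<^sub>v y) $ j"
        using a2 M[OF j] by linarith
      have "lam * lam * (A *\<^sub>v y) $ j = 1 + lam * (1 - lam) * (R2 *\<^sub>v y) $ j + (1 - lam * lam) * (- (S2 *\<^sub>v y) $ j)"
        unfolding a3 by (simp add: algebra_simps)
      also have "\<dots> \<ge> 0" using r s lam lpos by (intro add_nonneg_nonneg mult_nonneg_nonneg) (auto simp: mult_le_one)
      finally have "0 \<le> lam * lam * (A *\<^sub>v y) $ j" .
      moreover have "0 < lam * lam" using lpos by simp
      ultimately show ?thesis using zero_le_mult_iff by (metis not_less)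
    qed
    define Ay where "Ay = A *\<^sub>v y"
    have Ayc: "Ay \<in> carrier_vec n" unfolding Ay_def using A y by simp
    define g where "g = vec n (\<lambda>j. 1 * y $ j + (- lam) * (H1 *\<^sub>v y) $ j + 1 * (K1 *\<^sub>v y) $ j)"
    have gc: "g \<in> carrier_vec n" unfolding g_def by simp
    have gnn: "0 \<le> g $ j" if j: "j < n" for j
    proof -
      define Ay' where "Ay' = vec n (\<lambda>j. 1 * (P1 *\<^sub>v y) $ j + (- 1) * (R1 *\<^sub>v y) $ j + 1 * (S1 *\<^sub>v y) $ j)"
      have "Ay = Ay'" unfolding Ay_def Ay'_def
        by (rule eq_vecI) (use A y sum3_mat_entry[OF A1 P1 R1 S1 y] in auto)
      have "(Q1 *\<^sub>v Ay') $ j = 1 * (Q1 *\<^sub>v (P1 *\<^sub>v y)) $ j + (- 1) * (Q1 *\<^sub>v (R1 *\<^sub>v y)) $ j + 1 * (Q1 *\<^sub>v (S1 *\<^sub>v y)) $ j"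
        by (rule lincomb3[OF Q1(1)]) (use y P1 R1 S1 j in \<open>auto simp: Ay'_def\<close>)
      moreover have "Q1 *\<^sub>v (P1 *\<^sub>v y) = y" using Q1 P1 y by (simp flip: assoc_mult_mat_vec)
      moreover have "Q1 *\<^sub>v (R1 *\<^sub>v y) = H1 *\<^sub>v y" unfolding H1_def using Q1 R1 y by (simp flip: assoc_mult_mat_vec)
      moreover have "Q1 *\<^sub>v (S1 *\<^sub>v y) = K1 *\<^sub>v y" unfolding K1_def using Q1 S1 y by (simp flip: assoc_mult_mat_vec)
      ultimately have QA: "(Q1 *\<^sub>v Ay) $ j = y $ j - (H1 *\<^sub>v y) $ j + (K1 *\<^sub>v y) $ j" using \<open>Ay = Ay'\<close> by simp
      have "0 \<le> (Q1 *\<^sub>v Ay) $ j"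
        by (rule nonneg_mv[OF _ Q1(1) Ayc]) (use Q1nn Q1_def Ay j in \<open>auto simp: Ay_def\<close>)
      moreover have "0 \<le> (H1 *\<^sub>v y) $ j" using H1 y yn j by (intro nonneg_mv) auto
      moreover have "g $ j = (Q1 *\<^sub>v Ay) $ j + (1 - lam) * (H1 *\<^sub>v y) $ j" using QA j by (simp add: g_def algebra_simps)
      ultimately show ?thesis using lam by simp
    qed
    have x: "u \<in> carrier_vec (n+n)" by fact
    have up: "\<And>i. i < n + n \<Longrightarrow> 0 < u $ i" unfolding uu using u1 y u1p yp by auto
    have Wu: "W *\<^sub>v u = ((H2 - K2 * H1) *\<^sub>v u1 + (K2 * K1) *\<^sub>v y) @\<^sub>v (1\<^sub>m n *\<^sub>v u1 + 0\<^sub>m n n *\<^sub>v y)"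
      unfolding W_def uu using H2 K2 H1 K1 u1 y by (intro four_block_mat_mult_vec) auto
    have "(W *\<^sub>v u) $ i \<le> lam * u $ i" if i: "i < n + n" for i
    proof (cases "i < n")
      case True
      have e1: "((H2 - K2 * H1) *\<^sub>v u1) $ i = (H2 *\<^sub>v u1) $ i - ((K2 * H1) *\<^sub>v u1) $ i"
        by (rule minus_mv) (use H2 K2 H1 u1 True in auto)
      have e2: "(K2 * H1) *\<^sub>v u1 = lam \<cdot>\<^sub>v (K2 *\<^sub>v (H1 *\<^sub>v y))"
        unfolding u1y using K2 H1 y mult_mat_vec[OF H1(1) y] mult_mat_vec[OF K2(1), of "H1 *\<^sub>v y"] by simp
      have e3: "(K2 * K1) *\<^sub>v y = K2 *\<^sub>v (K1 *\<^sub>v y)" using K2 K1 y by simp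
      have lhs: "(W *\<^sub>v u) $ i = lam * (H2 *\<^sub>v y) $ i - lam * (K2 *\<^sub>v (H1 *\<^sub>v y)) $ i + (K2 *\<^sub>v (K1 *\<^sub>v y)) $ i"
        unfolding Wu using True H2 K2 H1 K1 u1 y e1 e2 e3 H2u1 by simp
      have Kg: "(K2 *\<^sub>v g) $ i = 1 * (K2 *\<^sub>v y) $ i + (- lam) * (K2 *\<^sub>v (H1 *\<^sub>v y)) $ i + 1 * (K2 *\<^sub>v (K1 *\<^sub>v y)) $ i"
        by (rule lincomb3[OF K2(1) gc]) (use y H1 K1 True in \<open>auto simp: g_def\<close>)
      have "(K2 *\<^sub>v g) $ i \<le> 0" using K2 gc gnn True by (intro nonpos_mv) auto
      hence "(W *\<^sub>v u) $ i \<le> lam * lam * y $ i - v $ i" using lhs Kg F1[OF True] by simp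
      also have "\<dots> \<le> lam * u $ i" using vp[OF True] True uu u1 y bot[OF True] by (simp add: u1_def)
      finally show ?thesis .
    next
      case False
      have "(W *\<^sub>v u) $ i = u1 $ (i - n)" unfolding Wu using False i H2 K2 H1 K1 u1 y by simp
      also have "\<dots> = lam * u $ i" using bot[of "i - n"] False i unfolding y_def by simp
      finally show ?thesis by simp
    qed
    from rho_le[OF Wc nn2 Wnn x up this] show ?thesis .
  qed
  have rWT2: "rho W \<le> rho T2"
  proof (rule dense_ge)
    fix lam assume lam: "rho T2 < lam"
    define l' where "l' = min lam ((rho T2 + 1) / 2)"
    have "rho T2 < l'" "l' \<le> lam" using lam rT2 unfolding l'_def by auto
    moreover have "l' < 1" using rT2 unfolding l'_def by (simp add: min_less_iff_disj)
    ultimately show "rho W \<le> lam" using rW[of l'] by linarith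
  qed
  have mn: "min (rho T1) (rho T2) = rho T2" using r21 by simp
  have "rho W \<le> min (rho T1) (rho T2) \<and> min (rho T1) (rho T2) < 1"
    unfolding mn using rWT2 rT2 by simp
  thus ?thesis unfolding W_def T1_def T2_def H1_def H2_def K1_def K2_def Q1_def Q2_def X Y .
qed
end
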